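(* Let $\Gamma$ be a rotating boundary periodic orbit of a surface of section $\Sigma$ of a Reeb flow (as in the context). If $\Gamma$ is elliptic and its Floquet multipliers are not roots of unity, then the extension $P$ of the first return map to the boundary component $\Gamma\subset\partial\Sigma$ has no periodic points.
   Context: $(N,\lambda)$ closed contact 3-manifold, Reeb flow $\psi_t$, contact structure $\xi=\ker\lambda$ (invariant under $d\psi_t$). $\Sigma$ is a surface of section (compact immersed surface with boundary, interior embedded and transversal to the Reeb field, boundary covering closed orbits) with a boundary orbit $\Gamma$ which is rotating: there is a neighbourhood of $\Gamma$ in $\Sigma$ on which the first return times of $\psi_t$ and $\psi_{-t}$ to $\Sigma$ are bounded. The surface $\Sigma$ has an asymptotic direction $e(t)\in\xi(\Gamma(t))$ along $\Gamma$ (its limit tangent direction transversal to the flow), which rotates more slowly than its image under the linearized flow. The extension of the return map to $\Gamma$ is $P(\Gamma(t))=\Gamma(b(t))$ with $b(t)=t+\min\{s>0:\exists c>0,\ d\psi_s(e(t))=c\,e(t+s)\}$. *)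

theory Defs
  imports "HOL-Analysis.Analysis"
begin

text \<open>Linearized Reeb flow along a closed orbit of period T, written in a T-periodic
  (positively oriented) frame of the contact plane field along the orbit:
  lin_flow t s is the matrix of d psi_s : xi(Gamma t) -> xi(Gamma (t+s)).\<close>

definition rot2 :: "real \<Rightarrow> real^2^2" where
  "rot2 a = vector [vector [cos a, - sin a], vector [sin a, cos a]]"

definition complexify :: "real^2^2 \<Rightarrow> complex^2^2" where
  "complexify M = (\<chi> i j. complex_of_real (M $ i $ j))"

text \<open>Floquet multipliers: the (complex) eigenvalues of the monodromy d psi_T.\<close>
definition floquet_multipliers :: "real^2^2 \<Rightarrow> complex set" where
  "floquet_multipliers M = {z. det (complexify M - mat z) = 0}"

definition elliptic_monodromy :: "real^2^2 \<Rightarrow> bool" where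
  "elliptic_monodromy M \<longleftrightarrow>
     (\<forall>z \<in> floquet_multipliers M. cmod z = 1 \<and> z \<notin> \<real>)"

definition root_of_unity :: "complex \<Rightarrow> bool" where
  "root_of_unity z \<longleftrightarrow> (\<exists>n::nat. n \<ge> 1 \<and> z ^ n = 1)"

text \<open>A linearized flow along a T-periodic orbit: a continuous cocycle of
  area-preserving linear maps of the contact plane, in a T-periodic frame.\<close>
definition linearized_flow :: "real \<Rightarrow> (real \<Rightarrow> real \<Rightarrow> real^2^2) \<Rightarrow> bool" where
  "linearized_flow T \<Phi> \<longleftrightarrow> T > 0 \<and>
     continuous_on UNIV (\<lambda>(t, s). \<Phi> t s) \<and>
     (\<forall>t. \<Phi> t 0 = mat 1) \<and>
     (\<forall>t s r. \<Phi> t (s + r) = \<Phi> (t + s) r ** \<Phi> t s) \<and>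
     (\<forall>t s. \<Phi> (t + T) s = \<Phi> t s) \<and>
     (\<forall>t s. det (\<Phi> t s) = 1)"

text \<open>Asymptotic direction e along Gamma (T-periodic, continuous, non-vanishing).\<close>
definition asymptotic_direction :: "real \<Rightarrow> (real \<Rightarrow> real^2) \<Rightarrow> bool" where
  "asymptotic_direction T e \<longleftrightarrow> continuous_on UNIV e \<and>
     (\<forall>t. e (t + T) = e t) \<and> (\<forall>t. e t \<noteq> 0)"

text \<open>e rotates more slowly than its image under the linearized flow: the
  continuous angle from e(t+s) to d psi_s (e t), starting at 0 for s = 0,
  is strictly increasing in s \<ge> 0.\<close>
definition rotates_slower :: "(real \<Rightarrow> real \<Rightarrow> real^2^2) \<Rightarrow> (real \<Rightarrow> real^2) \<Rightarrow> bool" where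
  "rotates_slower \<Phi> e \<longleftrightarrow> (\<exists>\<theta> :: real \<Rightarrow> real \<Rightarrow> real. \<forall>t.
     continuous_on {0..} (\<theta> t) \<and> \<theta> t 0 = 0 \<and> strict_mono_on {0..} (\<theta> t) \<and>
     (\<forall>s \<ge> 0. \<exists>c > 0. \<Phi> t s *v e t = c *\<^sub>R (rot2 (\<theta> t s) *v e (t + s))))"

text \<open>Return times of the directions; b t = t + min of them.\<close>
definition return_set :: "(real \<Rightarrow> real \<Rightarrow> real^2^2) \<Rightarrow> (real \<Rightarrow> real^2) \<Rightarrow> real \<Rightarrow> real set" where
  "return_set \<Phi> e t = {s. s > 0 \<and> (\<exists>c > 0. \<Phi> t s *v e t = c *\<^sub>R e (t + s))}"

definition boundary_return :: "(real \<Rightarrow> real \<Rightarrow> real^2^2) \<Rightarrow> (real \<Rightarrow> real^2) \<Rightarrow> real \<Rightarrow> real" where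
  "boundary_return \<Phi> e t = t + (LEAST s. s \<in> return_set \<Phi> e t)"

end

theory Submission
  imports Defs
begin

lemma mv2: "((M::real^2^2) *v x) $ 1 = M$1$1 * x$1 + M$1$2 * x$2"
           "(M *v x) $ 2 = M$2$1 * x$1 + M$2$2 * x$2"
  by (simp_all add: matrix_vector_mult_def sum_2)

lemma rot2_mv: "(rot2 a *v x) $ 1 = cos a * x$1 - sin a * x$2"
  "(rot2 a *v x) $ 2 = sin a * x$1 + cos a * x$2"
  by (simp_all add: mv2 rot2_def)

lemma rot2_2pi: "rot2 (2*pi) = mat 1"
  by (simp add: rot2_def vec_eq_iff forall_2 mat_def)

lemma vec2_eq: "(x::real^2) = y \<longleftrightarrow> x$1 = y$1 \<and> x$2 = y$2"
  by (simp add: vec_eq_iff forall_2)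

lemma vec2_nz: "(x::real^2) \<noteq> 0 \<longleftrightarrow> x$1 \<noteq> 0 \<or> x$2 \<noteq> 0"
  by (simp add: vec_eq_iff forall_2)

lemma rot_fix:
  assumes "rot2 a *v x = r *\<^sub>R x" "x \<noteq> 0" "r > 0"
  shows "cos a = 1"
proof -
  have e1: "cos a * x$1 - sin a * x$2 = r * x$1" and e2: "sin a * x$1 + cos a * x$2 = r * x$2"
    using assms(1) by (simp_all add: vec2_eq rot2_mv)
  have "(cos a - r) * (x$1^2 + x$2^2) = 0"
  proof -
    have "(cos a - r) * x$1 * x$1 = sin a * x$2 * x$1" using e1 by (simp add: algebra_simps)
    moreover have "(sin a * x$1 + cos a * x$2) * x$2 = r * x$2 * x$2" using e2 by simp
    then have "sin a * x$1 * x$2 = (r - cos a) * x$2 * x$2" by (simp add: algebra_simps)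
    ultimately show ?thesis by (simp add: power2_eq_square algebra_simps)
  qed
  moreover have "x$1^2 + x$2^2 > 0" using assms(2) by (auto simp: vec2_nz add_pos_nonneg add_nonneg_pos)
  ultimately have c: "cos a = r" by (metis mult_eq_0_iff less_irrefl eq_iff_diff_eq_0)
  then have "sin a * x$2 = 0" "sin a * x$1 = 0" using e1 e2 by (simp_all add: algebra_simps)
  then have "sin a = 0" using assms(2) by (auto simp: vec2_nz)
  then have "cos a = 1 \<or> cos a = -1" using sin_cos_squared_add[of a] by (simp add: power2_eq_1_iff)
  then show ?thesis using c assms(3) by auto
qed

lemma charpoly2: "det (complexify M - mat z) = z^2 - complex_of_real (M$1$1 + M$2$2) * z + complex_of_real (det M)"
  by (simp add: det_2 complexify_def mat_def power2_eq_square algebra_simps)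

lemma CH2:
  assumes "det (M::real^2^2) = 1"
  shows "M *v (M *v x) = (M$1$1 + M$2$2) *\<^sub>R (M *v x) - x"
  using assms by (simp add: vec2_eq mv2 det_2 algebra_simps)


theorem proposition3p1:
  fixes T :: real
    and \<Gamma> :: "real \<Rightarrow> 'a"
    and \<Phi> :: "real \<Rightarrow> real \<Rightarrow> real^2^2"
    and e :: "real \<Rightarrow> real^2"
    and P :: "'a \<Rightarrow> 'a"
  assumes flow: "linearized_flow T \<Phi>"
    and orbit: "\<forall>t t'. \<Gamma> t = \<Gamma> t' \<longleftrightarrow> (\<exists>k::int. t' = t + of_int k * T)"
    and dir: "asymptotic_direction T e"
    and slower: "rotates_slower \<Phi> e"
    and rotating: "\<forall>t. return_set \<Phi> e t \<noteq> {}"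
    and P_ext: "\<forall>t. P (\<Gamma> t) = \<Gamma> (boundary_return \<Phi> e t)"
    and elliptic: "elliptic_monodromy (\<Phi> 0 T)"
    and irrational: "\<forall>z \<in> floquet_multipliers (\<Phi> 0 T). \<not> root_of_unity z"
  shows "\<not> (\<exists>x \<in> range \<Gamma>. \<exists>n::nat. n \<ge> 1 \<and> (P ^^ n) x = x)"
proof
  assume "\<exists>x \<in> range \<Gamma>. \<exists>n::nat. n \<ge> 1 \<and> (P ^^ n) x = x"
  then obtain t n where n1: "n \<ge> 1" and per: "(P ^^ n) (\<Gamma> t) = \<Gamma> t" by auto
  define b where "b = boundary_return \<Phi> e"
  have T0: "T > 0" and id0: "\<And>t. \<Phi> t 0 = mat 1"
    and coc: "\<And>t s r. \<Phi> t (s + r) = \<Phi> (t + s) r ** \<Phi> t s"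
    and perT: "\<And>t s. \<Phi> (t + T) s = \<Phi> t s" and det1: "\<And>t s. det (\<Phi> t s) = 1"
    using flow unfolding linearized_flow_def by auto
  have eper: "\<And>t. e (t + T) = e t" and enz: "\<And>t. e t \<noteq> 0"
    using dir unfolding asymptotic_direction_def by auto
  obtain \<theta> :: "real \<Rightarrow> real \<Rightarrow> real" where th: "\<And>t. continuous_on {0..} (\<theta> t)" "\<And>t. \<theta> t 0 = 0"
    "\<And>t. strict_mono_on {0..} (\<theta> t)"
    "\<And>t s. s \<ge> 0 \<Longrightarrow> \<exists>c > 0. \<Phi> t s *v e t = c *\<^sub>R (rot2 (\<theta> t s) *v e (t + s))"
    using slower unfolding rotates_slower_def by metis
  have ge: "\<theta> t s \<ge> 2*pi" if s: "s \<in> return_set \<Phi> e t" for t s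
  proof -
    from s obtain c where s0: "s > 0" and c: "c > 0" "\<Phi> t s *v e t = c *\<^sub>R e (t+s)"
      unfolding return_set_def by auto
    from th(4)[of s t] s0 obtain c' where c': "c' > 0" "\<Phi> t s *v e t = c' *\<^sub>R (rot2 (\<theta> t s) *v e (t + s))"
      by auto
    have "rot2 (\<theta> t s) *v e (t + s) = (c / c') *\<^sub>R e (t+s)"
    proof -
      have "c' *\<^sub>R (rot2 (\<theta> t s) *v e (t + s)) = c *\<^sub>R e (t+s)" using c c' by simp
      then have "(1/c') *\<^sub>R (c' *\<^sub>R (rot2 (\<theta> t s) *v e (t + s))) = (1/c') *\<^sub>R (c *\<^sub>R e (t+s))" by simp
      then show ?thesis using c'(1) by (simp add: divide_inverse_commute)
    qed
    then have "cos (\<theta> t s) = 1" using rot_fix enz c c' by (meson divide_pos_pos)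
    then obtain k :: int where k: "\<theta> t s = k * 2 * pi" using cos_one_2pi_int by auto
    have "\<theta> t s > 0" using strict_mono_onD[OF th(3)[of t], of 0 s] th(2)[of t] s0 by auto
    then have "real_of_int k * (2*pi) > 0" using k by (simp add: mult.assoc)
    then have "real_of_int k > 0" by (simp add: zero_less_mult_iff)
    then have "real_of_int k \<ge> 1" by simp
    then have "1 * (2*pi) \<le> real_of_int k * (2*pi)" by (intro mult_right_mono) auto
    then show ?thesis using k by (simp add: mult.assoc)
  qed
  have ret: "b t - t \<in> return_set \<Phi> e t" for t
  proof -
    obtain s0 where s0: "s0 \<in> return_set \<Phi> e t" using rotating by auto
    have s0p: "s0 > 0" using s0 unfolding return_set_def by auto
    have "\<exists>s1\<ge>0. s1 \<le> s0 \<and> \<theta> t s1 = 2*pi"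
      apply (rule IVT')
      using th(2)[of t] ge[OF s0] s0p continuous_on_subset[OF th(1)[of t]] by auto
    then obtain s1 where s1: "s1 \<ge> 0" "\<theta> t s1 = 2*pi" by auto
    have s1p: "s1 > 0" using s1 th(2)[of t] by (cases "s1 = 0") auto
    have s1r: "s1 \<in> return_set \<Phi> e t"
      using th(4)[of s1 t] s1 s1p by (auto simp: return_set_def rot2_2pi)
    have min: "s1 \<le> s" if "s \<in> return_set \<Phi> e t" for s
    proof (rule ccontr)
      assume "\<not> s1 \<le> s"
      moreover have "s > 0" using that unfolding return_set_def by auto
      ultimately have "\<theta> t s < \<theta> t s1" using strict_mono_onD[OF th(3)[of t], of s s1] s1 by simp
      then show False using ge[OF that] s1 by simp
    qed
    have "(LEAST s. s \<in> return_set \<Phi> e t) = s1"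
      by (rule Least_equality) (use s1r min in auto)
    then show ?thesis using s1r by (simp add: b_def boundary_return_def)
  qed
  have it: "\<exists>c>0. \<Phi> t ((b^^k) t - t) *v e t = c *\<^sub>R e ((b^^k) t) \<and> (b^^k) t \<ge> t \<and> (k \<ge> 1 \<longrightarrow> (b^^k) t > t)" for k t
  proof (induction k arbitrary: t)
    case 0
    then show ?case by (auto simp: id0 intro: exI[of _ 1])
  next
    case (Suc k)
    obtain c2 where c2: "c2 > 0" "\<Phi> (b t) ((b^^k) (b t) - b t) *v e (b t) = c2 *\<^sub>R e ((b^^k) (b t))"
      "(b^^k) (b t) \<ge> b t" using Suc[of "b t"] by auto
    obtain c1 where c1: "c1 > 0" "\<Phi> t (b t - t) *v e t = c1 *\<^sub>R e (b t)" "b t - t > 0"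
      using ret[of t] unfolding return_set_def by auto
    have eq: "(b^^Suc k) t = (b^^k) (b t)" by (simp only: funpow_Suc_right o_apply)
    have "\<Phi> t ((b t - t) + ((b^^k) (b t) - b t)) = \<Phi> (b t) ((b^^k) (b t) - b t) ** \<Phi> t (b t - t)"
      using coc[of t "b t - t" "(b^^k) (b t) - b t"] by simp
    then have "\<Phi> t ((b^^k) (b t) - t) *v e t = (c1 * c2) *\<^sub>R e ((b^^k) (b t))"
      using c1 c2 by (simp add: matrix_vector_mul_assoc[symmetric] matrix_vector_mult_scaleR)
    then show ?case unfolding eq using c1 c2 by (intro exI[of _ "c1*c2"]) auto
  qed
  have Pn: "(P^^k) (\<Gamma> s) = \<Gamma> ((b^^k) s)" for k s
    by (induction k arbitrary: s) (simp_all only: funpow_Suc_right o_apply P_ext b_def funpow_0)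
  from per Pn have "\<Gamma> t = \<Gamma> ((b^^n) t)" by simp
  then obtain k :: int where k: "(b^^n) t = t + k * T" using orbit by auto
  obtain c where c: "c > 0" "\<Phi> t ((b^^n) t - t) *v e t = c *\<^sub>R e ((b^^n) t)" and gt: "(b^^n) t > t"
    using it[where k=n and t=t] n1 by auto
  have "of_int k * T > 0" using k gt by simp
  then have "k > 0" using T0 by (simp add: zero_less_mult_iff)
  define m where "m = nat k"
  have m1: "m \<ge> 1" and km: "real m = of_int k" using \<open>k > 0\<close> by (auto simp: m_def)
  define S where "S = real m * T"
  define M where "M = \<Phi> 0 T"
  have bS: "(b^^n) t = t + S" using k km by (simp add: S_def)
  have eperm: "e (s + real j * T) = e s" for j s
  proof (induction j)
    case (Suc j)
    have "s + real (Suc j) * T = (s + real j * T) + T" by (simp add: algebra_simps)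
    then show ?case using Suc eper[of "s + real j * T"] by metis
  qed simp
  have Phiper: "\<Phi> (real j * T) s = \<Phi> 0 s" for j s
  proof (induction j)
    case (Suc j)
    have "real (Suc j) * T = real j * T + T" by (simp add: algebra_simps)
    then show ?case using Suc perT[of "real j * T" s] by metis
  qed simp
  have Mrec: "\<Phi> 0 (real (Suc j) * T) = M ** \<Phi> 0 (real j * T)" for j
  proof -
    have "real (Suc j) * T = real j * T + T" by (simp add: algebra_simps)
    then show ?thesis using coc[of 0 "real j * T" T] Phiper[of j T] by (simp add: M_def)
  qed
  define u where "u = \<Phi> t (-t) *v e t"
  have inv1: "\<Phi> 0 t ** \<Phi> t (-t) = mat 1" using coc[of t "-t" t] id0[of t] by simp
  have inv2: "\<Phi> t (-t) ** \<Phi> 0 t = mat 1" using coc[of 0 t "-t"] id0[of 0] by simp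
  have comm: "\<Phi> t S ** \<Phi> 0 t = \<Phi> 0 t ** \<Phi> 0 S"
    using coc[of 0 t S] coc[of 0 S t] Phiper[of m t] by (simp add: S_def add.commute)
  have eSt: "e (t + S) = e t" using eperm by (simp add: S_def)
  have ut: "\<Phi> 0 t *v u = e t" unfolding u_def
    by (simp add: matrix_vector_mul_assoc inv1)
  have unz: "u \<noteq> 0" using ut enz[of t] by auto
  have cS: "\<Phi> t S *v e t = c *\<^sub>R e t" using c bS eSt by simp
  have wS: "\<Phi> 0 S *v u = c *\<^sub>R u"
  proof -
    have "\<Phi> 0 S *v u = (\<Phi> t (-t) ** \<Phi> 0 t) *v (\<Phi> 0 S *v u)" by (simp add: inv2)
    also have "\<dots> = \<Phi> t (-t) *v ((\<Phi> 0 t ** \<Phi> 0 S) *v u)" by (simp add: matrix_vector_mul_assoc matrix_mul_assoc)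
    also have "\<dots> = \<Phi> t (-t) *v (\<Phi> t S *v (\<Phi> 0 t *v u))" by (simp add: comm[symmetric] matrix_vector_mul_assoc)
    also have "\<dots> = \<Phi> t (-t) *v (c *\<^sub>R e t)" by (simp only: ut cS)
    also have "\<dots> = c *\<^sub>R u" by (simp add: matrix_vector_mult_scaleR u_def)
    finally show ?thesis .
  qed
  define tr where "tr = M$1$1 + M$2$2"
  have detM: "det M = 1" using det1 by (simp add: M_def)
  define lam where "lam = (complex_of_real tr + csqrt (complex_of_real tr ^ 2 - 4)) / 2"
  have lq: "lam^2 = complex_of_real tr * lam - 1"
  proof -
    have "(2*lam - complex_of_real tr)^2 = complex_of_real tr ^ 2 - 4"
    proof -
      have "2*lam - complex_of_real tr = csqrt (complex_of_real tr ^ 2 - 4)" unfolding lam_def by (simp add: field_simps)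
      then show ?thesis by simp
    qed
    then have "4 * (lam^2 - (complex_of_real tr * lam - 1)) = 0" by (simp add: power2_eq_square algebra_simps)
    then have "lam^2 - (complex_of_real tr * lam - 1) = 0" by (simp only: mult_eq_0_iff) simp
    then show ?thesis by simp
  qed
  have lF: "lam \<in> floquet_multipliers M"
    unfolding floquet_multipliers_def using lq by (simp add: charpoly2 detM tr_def)
  have CH: "M *v (M *v x) = tr *\<^sub>R (M *v x) - x" for x using CH2[OF detM] by (simp add: tr_def)
  have rec: "\<exists>a bb. \<Phi> 0 (real j * T) *v u = a *\<^sub>R (M *v u) + bb *\<^sub>R u \<and> lam^j = of_real a * lam + of_real bb" for j
  proof (induction j)
    case 0
    show ?case by (rule exI[of _ 0], rule exI[of _ 1]) (simp add: id0)
  next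
    case (Suc j)
    then obtain a bb where ab: "\<Phi> 0 (real j * T) *v u = a *\<^sub>R (M *v u) + bb *\<^sub>R u"
      "lam^j = of_real a * lam + of_real bb" by blast
    have "\<Phi> 0 (real (Suc j) * T) *v u = M *v (a *\<^sub>R (M *v u) + bb *\<^sub>R u)"
      unfolding Mrec by (simp only: matrix_vector_mul_assoc[symmetric] ab)
    also have "\<dots> = a *\<^sub>R (M *v (M *v u)) + bb *\<^sub>R (M *v u)"
      by (simp add: matrix_vector_right_distrib matrix_vector_mult_scaleR)
    also have "\<dots> = (a * tr + bb) *\<^sub>R (M *v u) + (- a) *\<^sub>R u"
      by (simp add: CH algebra_simps)
    finally have 1: "\<Phi> 0 (real (Suc j) * T) *v u = (a * tr + bb) *\<^sub>R (M *v u) + (- a) *\<^sub>R u" .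
    have "lam^Suc j = of_real a * lam^2 + of_real bb * lam" using ab by (simp add: power2_eq_square algebra_simps)
    also have "\<dots> = of_real (a * tr + bb) * lam + of_real (- a)" by (simp add: lq algebra_simps)
    finally show ?case using 1 by blast
  qed
  obtain a bb where ab: "\<Phi> 0 S *v u = a *\<^sub>R (M *v u) + bb *\<^sub>R u" "lam^m = of_real a * lam + of_real bb"
    using rec[of m] by (auto simp: S_def)
  have eq: "a *\<^sub>R (M *v u) + bb *\<^sub>R u = c *\<^sub>R u" using ab wS by simp
  show False
  proof (cases "a = 0")
    case False
    define \<mu> where "\<mu> = (c - bb) / a"
    have Mu: "M *v u = \<mu> *\<^sub>R u"
    proof -
      have "a *\<^sub>R (M *v u) = (c - bb) *\<^sub>R u" using eq by (simp add: algebra_simps)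
      then have "(1/a) *\<^sub>R (a *\<^sub>R (M *v u)) = (1/a) *\<^sub>R ((c - bb) *\<^sub>R u)" by simp
      then show ?thesis using False by (simp add: \<mu>_def divide_inverse_commute)
    qed
    have A: "M *v (M *v u) = (\<mu> * \<mu>) *\<^sub>R u" by (simp add: Mu matrix_vector_mult_scaleR)
    have B: "M *v (M *v u) = (tr * \<mu> - 1) *\<^sub>R u" using CH[of u] Mu by (simp add: scaleR_diff_left)
    from A B have "(\<mu> * \<mu>) *\<^sub>R u = (tr * \<mu> - 1) *\<^sub>R u" by auto
    then have "\<mu> * \<mu> = tr * \<mu> - 1" using unz by auto
    then have "complex_of_real \<mu> \<in> floquet_multipliers M"
      unfolding floquet_multipliers_def
      by (simp add: charpoly2 detM tr_def[symmetric] power2_eq_square flip: of_real_mult of_real_diff)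
    then show False using elliptic unfolding elliptic_monodromy_def M_def by auto
  next
    case True
    then have "bb *\<^sub>R u = c *\<^sub>R u" using eq by simp
    then have "bb = c" using unz by simp
    then have lm: "lam^m = of_real c" using ab True by simp
    have "cmod lam = 1" using lF elliptic unfolding elliptic_monodromy_def M_def by auto
    then have "cmod (lam^m) = 1" by (simp add: norm_power)
    then have "c = 1" using lm c(1) by simp
    then have "root_of_unity lam" using lm m1 unfolding root_of_unity_def by auto
    then show False using irrational lF unfolding M_def by auto
  qed
qed

end
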